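(* The set consisting of the three identities $(xy)(zt)=(xz)(yt)$, $(xy)(zt)=(ty)(zx)$ and $(xy^2)y^2=x$ is a basis for $\Sigma_{2,3,4}$.
   Context: $y^2$ denotes $yy$. $\Sigma_{2,3,4}$ is the set of groupoid identities satisfied in the integers $\mathbb{Z}$ by each of the binary operations $x-y$, $-x+y$ and $-x-y$. A basis is a set of identities whose equational consequences are exactly $\Sigma_{2,3,4}$. *)

theory Defs
  imports Main
begin

datatype gterm = Var nat | Op gterm gterm

type_synonym identity = "gterm \<times> gterm"

fun eval :: "('a \<Rightarrow> 'a \<Rightarrow> 'a) \<Rightarrow> (nat \<Rightarrow> 'a) \<Rightarrow> gterm \<Rightarrow> 'a" where
  "eval f \<rho> (Var n) = \<rho> n"
| "eval f \<rho> (Op s t) = f (eval f \<rho> s) (eval f \<rho> t)"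

definition satisfies :: "('a \<Rightarrow> 'a \<Rightarrow> 'a) \<Rightarrow> identity \<Rightarrow> bool" where
  "satisfies f e \<longleftrightarrow> (\<forall>\<rho>. eval f \<rho> (fst e) = eval f \<rho> (snd e))"

definition Sigma234 :: "identity set" where
  "Sigma234 = {e. satisfies (\<lambda>x y::int. x - y) e \<and> satisfies (\<lambda>x y::int. - x + y) e
                  \<and> satisfies (\<lambda>x y::int. - x - y) e}"

fun subst :: "(nat \<Rightarrow> gterm) \<Rightarrow> gterm \<Rightarrow> gterm" where
  "subst \<sigma> (Var n) = \<sigma> n"
| "subst \<sigma> (Op s t) = Op (subst \<sigma> s) (subst \<sigma> t)"

inductive derivable :: "identity set \<Rightarrow> gterm \<Rightarrow> gterm \<Rightarrow> bool" for E where
  ax: "(s, t) \<in> E \<Longrightarrow> derivable E (subst \<sigma> s) (subst \<sigma> t)"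
| refl: "derivable E t t"
| sym: "derivable E s t \<Longrightarrow> derivable E t s"
| trans: "derivable E s t \<Longrightarrow> derivable E t u \<Longrightarrow> derivable E s u"
| cong: "derivable E s1 t1 \<Longrightarrow> derivable E s2 t2 \<Longrightarrow> derivable E (Op s1 s2) (Op t1 t2)"

definition consequences :: "identity set \<Rightarrow> identity set" where
  "consequences E = {(s, t). derivable E s t}"

definition is_basis_of :: "identity set \<Rightarrow> identity set \<Rightarrow> bool" where
  "is_basis_of B \<Sigma> \<longleftrightarrow> consequences B = \<Sigma>"

abbreviation vx where "vx \<equiv> Var 0"
abbreviation vy where "vy \<equiv> Var 1"
abbreviation vz where "vz \<equiv> Var 2"
abbreviation vt where "vt \<equiv> Var 3"

end

theory Submission
  imports Defs
begin

definition BB :: "identity set" where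
  "BB = { (Op (Op vx vy) (Op vz vt), Op (Op vx vz) (Op vy vt)),
       (Op (Op vx vy) (Op vz vt), Op (Op vt vy) (Op vz vx)),
       (Op (Op vx (Op vy vy)) (Op vy vy), vx) }"

lemma eval_subst: "eval f \<rho> (subst \<sigma> t) = eval f (\<lambda>n. eval f \<rho> (\<sigma> n)) t"
  by (induction t) auto

lemma BB_sound:
  assumes "(s, t) \<in> BB"
  shows "satisfies (\<lambda>x y::int. x - y) (s,t) \<and> satisfies (\<lambda>x y::int. - x + y) (s,t)
                  \<and> satisfies (\<lambda>x y::int. - x - y) (s,t)"
  using assms unfolding BB_def satisfies_def by (auto simp: algebra_simps)

lemma soundness:
  assumes "derivable BB s t" shows "(s, t) \<in> Sigma234"
  using assms
proof (induction rule: derivable.induct)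
  case (ax s t \<sigma>)
  then show ?case using BB_sound[OF ax] unfolding Sigma234_def satisfies_def
    by (simp add: eval_subst)
qed (auto simp: Sigma234_def satisfies_def)

lemma equivp_der: "equivp (derivable BB)"
  by (intro equivpI reflpI sympI transpI) (auto intro: derivable.intros)

quotient_type fterm = gterm / "derivable BB"
  by (rule equivp_der)

lift_definition mop :: "fterm \<Rightarrow> fterm \<Rightarrow> fterm" is Op
  by (rule derivable.cong)

lemma ax_inst:
  assumes "(l, r) \<in> BB"
  shows "derivable BB (subst \<sigma> l) (subst \<sigma> r)"
  using assms by (rule derivable.ax)

definition sig4 :: "gterm \<Rightarrow> gterm \<Rightarrow> gterm \<Rightarrow> gterm \<Rightarrow> nat \<Rightarrow> gterm" where
  "sig4 a b c d n = (if n = 0 then a else if n = 1 then b else if n = 2 then c else d)"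

lemma med: "mop (mop x y) (mop z t) = mop (mop x z) (mop y t)"
proof (transfer)
  fix x y z t
  show "derivable BB (Op (Op x y) (Op z t)) (Op (Op x z) (Op y t))"
    using ax_inst[of "Op (Op vx vy) (Op vz vt)" "Op (Op vx vz) (Op vy vt)" "sig4 x y z t"]
    by (simp add: BB_def sig4_def)
qed

lemma par: "mop (mop x y) (mop z t) = mop (mop t y) (mop z x)"
proof (transfer)
  fix x y z t
  show "derivable BB (Op (Op x y) (Op z t)) (Op (Op t y) (Op z x))"
    using ax_inst[of "Op (Op vx vy) (Op vz vt)" "Op (Op vt vy) (Op vz vx)" "sig4 x y z t"]
    by (simp add: BB_def sig4_def)
qed

lemma cyc: "mop (mop x (mop y y)) (mop y y) = x"
proof (transfer)
  fix x y
  show "derivable BB (Op (Op x (Op y y)) (Op y y)) x"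
    using ax_inst[of "Op (Op vx (Op vy vy)) (Op vy vy)" "vx" "sig4 x y x x"]
    by (simp add: BB_def sig4_def)
qed

lemma eval_abs: "eval mop (\<lambda>n. abs_fterm (Var n)) t = abs_fterm t"
  by (induction t) (auto simp: mop.abs_eq)

definition p :: "fterm \<Rightarrow> fterm \<Rightarrow> fterm \<Rightarrow> fterm" where
  "p x y z = mop (mop x y) (mop (mop y y) z)"

lemma p_xyy: "p x y y = x" unfolding p_def using cyc med by simp
lemma p_xxy: "p x x y = y" unfolding p_def by (metis cyc med par)
lemma p_mop: "p (mop a1 a2) (mop b1 b2) (mop c1 c2) = mop (p a1 b1 c1) (p a2 b2 c2)"
  unfolding p_def
  by (simp only: med[of a1 a2 b1 b2] med[of b1 b2 b1 b2] med[of "mop b1 b1" "mop b2 b2" c1 c2]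
      med[of "mop a1 b1" "mop a2 b2" "mop (mop b1 b1) c1" "mop (mop b2 b2) c2"])
lemma p_p: "p (p a1 a2 a3) (p b1 b2 b3) (p c1 c2 c3) = p (p a1 b1 c1) (p a2 b2 c2) (p a3 b3 c3)"
proof -
  have "p (p a1 a2 a3) (p b1 b2 b3) (p c1 c2 c3) = p (mop (mop a1 a2) (mop (mop a2 a2) a3))
     (mop (mop b1 b2) (mop (mop b2 b2) b3)) (mop (mop c1 c2) (mop (mop c2 c2) c3))"
    by (simp only: p_def[of a1 a2 a3] p_def[of b1 b2 b3] p_def[of c1 c2 c3])
  also have "\<dots> = mop (mop (p a1 b1 c1) (p a2 b2 c2)) (mop (mop (p a2 b2 c2) (p a2 b2 c2)) (p a3 b3 c3))"
    by (simp only: p_mop)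
  also have "\<dots> = p (p a1 b1 c1) (p a2 b2 c2) (p a3 b3 c3)"
    by (simp only: p_def[of "p a1 b1 c1" "p a2 b2 c2" "p a3 b3 c3"])
  finally show ?thesis .
qed


instantiation fterm :: ab_group_add
begin
definition zero_fterm :: fterm where "zero_fterm = abs_fterm (Var 0)"
definition plus_fterm :: "fterm \<Rightarrow> fterm \<Rightarrow> fterm" where "plus_fterm x y = p x 0 y"
definition uminus_fterm :: "fterm \<Rightarrow> fterm" where "uminus_fterm x = p 0 x 0"
definition minus_fterm :: "fterm \<Rightarrow> fterm \<Rightarrow> fterm" where "minus_fterm x y = p x 0 (p 0 y 0)"
instance
proof
  fix a b c :: fterm
  have "p (p a 0 b) 0 c = p (p a 0 b) (p 0 0 0) (p 0 0 c)" by (simp only: p_xxy)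
  also have "\<dots> = p (p a 0 0) (p 0 0 0) (p b 0 c)" by (rule p_p)
  also have "\<dots> = p a 0 (p b 0 c)" by (simp only: p_xxy p_xyy)
  finally show "a + b + c = a + (b + c)" by (simp add: plus_fterm_def)
  have "p a 0 b = p (p b b a) (p b b 0) (p b 0 0)" by (simp only: p_xxy p_xyy)
  also have "\<dots> = p (p b b b) (p b b 0) (p a 0 0)" by (rule p_p)
  also have "\<dots> = p b 0 a" by (simp only: p_xxy p_xyy)
  finally show "a + b = b + a" by (simp add: plus_fterm_def)
  show "0 + a = a" by (simp add: plus_fterm_def p_xxy)
  have "p (p 0 a 0) 0 a = p (p 0 a 0) (p a a 0) (p a a a)" by (simp only: p_xxy)
  also have "\<dots> = p (p 0 a a) (p a a a) (p 0 0 a)" by (rule p_p)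
  also have "\<dots> = 0" by (simp only: p_xxy p_xyy)
  finally show "- a + a = 0" by (simp add: plus_fterm_def uminus_fterm_def)
  show "a - b = a + - b" by (simp add: plus_fterm_def uminus_fterm_def minus_fterm_def)
qed
end


lemma p_zero_left: "p 0 b c = - b + c"
proof -
  have "p 0 b c = p (p 0 0 0) (p b 0 0) (p 0 0 c)" by (simp only: p_xxy p_xyy)
  also have "\<dots> = p (p 0 b 0) (p 0 0 0) (p 0 0 c)" by (rule p_p)
  also have "\<dots> = - b + c" by (simp only: p_xxy p_xyy plus_fterm_def uminus_fterm_def)
  finally show ?thesis .
qed

lemma p_eq: "p a b c = a - b + c"
proof -
  have "p a b c = p (p a 0 0) (p 0 0 b) (p 0 0 c)" by (simp only: p_xxy p_xyy)
  also have "\<dots> = p (p a 0 0) (p 0 0 0) (p 0 b c)" by (rule p_p)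
  also have "\<dots> = a - b + c" by (simp add: p_xxy p_xyy plus_fterm_def[symmetric] p_zero_left)
  finally show ?thesis .
qed

definition c0 :: fterm where "c0 = mop 0 0"
definition ff :: "fterm \<Rightarrow> fterm" where "ff x = mop x 0 - c0"
definition gg :: "fterm \<Rightarrow> fterm" where "gg x = mop 0 x - c0"

lemma mop_dec: "mop x y = ff x + gg y + c0"
proof -
  have "mop x y = mop (p x 0 0) (p 0 0 y)" by (simp only: p_xxy p_xyy)
  also have "\<dots> = p (mop x 0) (mop 0 0) (mop 0 y)" by (rule p_mop[symmetric])
  finally show ?thesis by (simp add: p_eq ff_def gg_def c0_def)
qed

lemma ff_add: "ff (x + y) = ff x + ff y"
proof -
  have "mop (x + y) 0 = mop (p x 0 y) (p 0 0 0)" by (simp only: p_xxy plus_fterm_def)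
  also have "\<dots> = p (mop x 0) (mop 0 0) (mop y 0)" by (rule p_mop[symmetric])
  finally show ?thesis by (simp add: p_eq ff_def c0_def)
qed

lemma gg_add: "gg (x + y) = gg x + gg y"
proof -
  have "mop 0 (x + y) = mop (p 0 0 0) (p x 0 y)" by (simp only: p_xxy plus_fterm_def)
  also have "\<dots> = p (mop 0 x) (mop 0 0) (mop 0 y)" by (rule p_mop[symmetric])
  finally show ?thesis by (simp add: p_eq gg_def c0_def)
qed

lemma ff0: "ff 0 = 0" using ff_add[of 0 0] by simp
lemma gg0: "gg 0 = 0" using gg_add[of 0 0] by simp
lemma ff_neg: "ff (- x) = - ff x" using ff_add[of x "- x"] by (simp add: ff0 eq_neg_iff_add_eq_0 add.commute)
lemma gg_neg: "gg (- x) = - gg x" using gg_add[of x "- x"] by (simp add: gg0 eq_neg_iff_add_eq_0 add.commute)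

lemma K0: "ff (gg c0) + ff c0 + gg c0 + c0 = 0"
  using cyc[of 0 0] by (simp add: mop_dec ff_add gg_add ff0 gg0 algebra_simps)

lemma ffff: "ff (ff x) = x"
proof -
  have "ff (ff x) + (ff (gg c0) + ff c0 + gg c0 + c0) = x"
    using cyc[of x 0] by (simp add: mop_dec ff_add gg_add ff0 gg0 algebra_simps)
  thus ?thesis by (simp add: K0)
qed

lemma ffgg: "ff (gg y) = gg (ff y)"
  using med[of 0 y 0 0] by (simp add: mop_dec ff_add gg_add ff0 gg0 algebra_simps)

lemma gggg: "gg (gg x) = x"
  using par[of x 0 0 0] by (simp add: mop_dec ff_add gg_add ff0 gg0 ffff algebra_simps)

lemma norm0: "y + ff y + gg y + ff (gg y) = 0"
proof -
  have "ff (gg (ff y + gg y + c0)) + ff c0 + gg (ff y + gg y + c0) + c0 = 0"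
    using cyc[of 0 y] by (simp add: mop_dec ff_add gg_add ff0 gg0 algebra_simps)
  hence "(y + ff y + gg y + ff (gg y)) + (ff (gg c0) + ff c0 + gg c0 + c0) = 0"
    by (simp add: ff_add gg_add ffgg ffff gggg algebra_simps)
  thus ?thesis using K0 by simp
qed


fun nm :: "nat \<Rightarrow> fterm \<Rightarrow> fterm" where
  "nm 0 x = 0"
| "nm (Suc n) x = x + nm n x"

lemma nm_add: "nm (m + n) x = nm m x + nm n x"
  by (induction m) (auto simp: algebra_simps)
lemma nm_dist: "nm k a + nm k b = nm k (a + b)"
  by (induction k) (auto simp: algebra_simps)
lemma nm_zero: "nm k 0 = 0"
  by (induction k) auto
lemma ff_nm: "ff (nm k x) = nm k (ff x)"
  by (induction k) (auto simp: ff_add ff0)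
lemma gg_nm: "gg (nm k x) = nm k (gg x)"
  by (induction k) (auto simp: gg_add gg0)

type_synonym ty = "bool \<times> bool"

definition flipL :: "ty \<Rightarrow> ty" where "flipL g = (\<not> fst g, snd g)"
definition flipR :: "ty \<Rightarrow> ty" where "flipR g = (fst g, \<not> snd g)"

definition lin :: "(ty \<Rightarrow> nat) \<Rightarrow> fterm \<Rightarrow> fterm" where
  "lin n x = nm (n (False,False)) x + nm (n (True,False)) (ff x) + nm (n (False,True)) (gg x)
     + nm (n (True,True)) (ff (gg x))"

lemma lin_plus: "lin (\<lambda>g. a g + b g) x = lin a x + lin b x"
  by (simp add: lin_def nm_add algebra_simps)

lemma ff_lin: "ff (lin n x) = lin (\<lambda>g. n (flipL g)) x"
  by (simp add: lin_def flipL_def ff_add ff_nm ffff ffgg algebra_simps)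

lemma gg_lin: "gg (lin n x) = lin (\<lambda>g. n (flipR g)) x"
  by (simp add: lin_def flipR_def gg_add gg_nm gggg ffgg algebra_simps)

lemma lin_const: "lin (\<lambda>_. k) x = 0"
proof -
  have "lin (\<lambda>_. k) x = nm k (x + ff x + gg x + ff (gg x))"
    by (simp add: lin_def nm_dist)
  thus ?thesis by (simp add: norm0 nm_zero)
qed

lemma lin_shift:
  assumes "\<And>g. int (a g) = int (b g) + d"
  shows "lin a x = lin b x"
proof (cases "d \<ge> 0")
  case True
  have "a = (\<lambda>g. b g + nat d)"
  proof
    fix g
    have "int (a g) = int (b g + nat d)" using assms[of g] True by simp
    thus "a g = b g + nat d" by (simp only: of_nat_eq_iff)
  qed
  thus ?thesis by (simp add: lin_plus lin_const)
next
  case False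
  have "b = (\<lambda>g. a g + nat (- d))"
  proof
    fix g
    have "int (b g) = int (a g + nat (- d))" using assms[of g] False by simp
    thus "b g = a g + nat (- d)" by (simp only: of_nat_eq_iff)
  qed
  thus ?thesis by (simp add: lin_plus lin_const)
qed

definition d00 :: "ty \<Rightarrow> nat" where "d00 g = (if g = (False, False) then 1 else 0)"

fun cnt :: "gterm \<Rightarrow> nat \<Rightarrow> ty \<Rightarrow> nat" where
  "cnt (Var w) v g = (if w = v then d00 g else 0)"
| "cnt (Op s t) v g = cnt s v (flipL g) + cnt t v (flipR g)"

fun kcnt :: "gterm \<Rightarrow> ty \<Rightarrow> nat" where
  "kcnt (Var w) g = 0"
| "kcnt (Op s t) g = kcnt s (flipL g) + kcnt t (flipR g) + d00 g"

fun lcnt :: "gterm \<Rightarrow> ty \<Rightarrow> nat" where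
  "lcnt (Var w) g = d00 g"
| "lcnt (Op s t) g = lcnt s (flipL g) + lcnt t (flipR g)"

lemma lin_d00: "lin d00 x = x" by (simp add: lin_def d00_def)
lemma lin_0: "lin (\<lambda>_. 0) x = 0" by (simp add: lin_def)

lemma E_upd: "eval mop (\<rho>(v:=x)) t = eval mop (\<rho>(v:=0)) t + lin (cnt t v) x"
proof (induction t)
  case (Var w)
  then show ?case by (cases "w = v") (auto simp: lin_def d00_def)
next
  case (Op s t)
  have eq: "cnt (Op s t) v = (\<lambda>g. cnt s v (flipL g) + cnt t v (flipR g))"
    by (simp add: fun_eq_iff)
  have L: "lin (cnt (Op s t) v) x = ff (lin (cnt s v) x) + gg (lin (cnt t v) x)"
    unfolding eq by (simp add: ff_lin gg_lin lin_plus)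
  have "eval mop (\<rho>(v:=x)) (Op s t) = mop (eval mop (\<rho>(v:=x)) s) (eval mop (\<rho>(v:=x)) t)"
    by simp
  also have "\<dots> = ff (eval mop (\<rho>(v:=x)) s) + gg (eval mop (\<rho>(v:=x)) t) + c0" by (rule mop_dec)
  also have "\<dots> = (ff (eval mop (\<rho>(v:=0)) s) + gg (eval mop (\<rho>(v:=0)) t) + c0)
       + (ff (lin (cnt s v) x) + gg (lin (cnt t v) x))"
    unfolding Op.IH by (simp add: ff_add gg_add algebra_simps)
  also have "\<dots> = eval mop (\<rho>(v:=0)) (Op s t) + lin (cnt (Op s t) v) x"
    unfolding L by (simp only: eval.simps mop_dec)
  finally show ?case .
qed

lemma E_const: "eval mop (\<lambda>_. 0) t = lin (kcnt t) c0"
proof (induction t)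
  case (Var w)
  then show ?case by (simp add: lin_def)
next
  case (Op s t)
  have eq: "kcnt (Op s t) = (\<lambda>g. (kcnt s (flipL g) + kcnt t (flipR g)) + d00 g)"
    by (simp add: fun_eq_iff)
  have "lin (kcnt (Op s t)) c0 = lin (\<lambda>g. kcnt s (flipL g) + kcnt t (flipR g)) c0 + lin d00 c0"
    unfolding eq by (rule lin_plus)
  also have "\<dots> = ff (lin (kcnt s) c0) + gg (lin (kcnt t) c0) + c0"
    by (simp add: ff_lin gg_lin lin_plus lin_d00)
  finally have K: "lin (kcnt (Op s t)) c0 = ff (lin (kcnt s) c0) + gg (lin (kcnt t) c0) + c0" .
  have "eval mop (\<lambda>_. 0) (Op s t) = mop (eval mop (\<lambda>_. 0) s) (eval mop (\<lambda>_. 0) t)"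
    by simp
  also have "\<dots> = ff (eval mop (\<lambda>_. 0) s) + gg (eval mop (\<lambda>_. 0) t) + c0" by (rule mop_dec)
  also have "\<dots> = lin (kcnt (Op s t)) c0" unfolding Op.IH by (rule K[symmetric])
  finally show ?case .
qed


definition dl :: "nat \<Rightarrow> nat \<Rightarrow> int" where "dl v w = (if w = v then 1 else 0)"

lemma ch1: "eval (\<lambda>x y::int. x - y) (dl v) t = int (cnt t v (False,False)) - int (cnt t v (False,True))
   + int (cnt t v (True,False)) - int (cnt t v (True,True))"
  by (induction t) (auto simp: flipL_def flipR_def d00_def dl_def)
lemma ch2: "eval (\<lambda>x y::int. - x + y) (dl v) t = int (cnt t v (False,False)) + int (cnt t v (False,True))
   - int (cnt t v (True,False)) - int (cnt t v (True,True))"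
  by (induction t) (auto simp: flipL_def flipR_def d00_def dl_def)
lemma ch3: "eval (\<lambda>x y::int. - x - y) (dl v) t = int (cnt t v (False,False)) - int (cnt t v (False,True))
   - int (cnt t v (True,False)) + int (cnt t v (True,True))"
  by (induction t) (auto simp: flipL_def flipR_def d00_def dl_def)

lemma lh1: "eval (\<lambda>x y::int. x - y) (\<lambda>_. 1) t = int (lcnt t (False,False)) - int (lcnt t (False,True))
   + int (lcnt t (True,False)) - int (lcnt t (True,True))"
  by (induction t) (auto simp: flipL_def flipR_def d00_def)
lemma lh2: "eval (\<lambda>x y::int. - x + y) (\<lambda>_. 1) t = int (lcnt t (False,False)) + int (lcnt t (False,True))
   - int (lcnt t (True,False)) - int (lcnt t (True,True))"
  by (induction t) (auto simp: flipL_def flipR_def d00_def)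
lemma lh3: "eval (\<lambda>x y::int. - x - y) (\<lambda>_. 1) t = int (lcnt t (False,False)) - int (lcnt t (False,True))
   - int (lcnt t (True,False)) + int (lcnt t (True,True))"
  by (induction t) (auto simp: flipL_def flipR_def d00_def)

lemma krel: "int (kcnt t g) - int (kcnt t (flipL g)) - int (kcnt t (flipR g)) = int (d00 g) - int (lcnt t g)"
proof (induction t arbitrary: g)
  case (Var w)
  then show ?case by simp
next
  case (Op s t)
  show ?case using Op.IH[of "flipL g"] Op.IH[of "flipR g"]
    by (cases g) (auto simp: flipL_def flipR_def d00_def)
qed

lemma all_ty: "(\<And>a b. P (a, b)) \<Longrightarrow> P g" by (cases g) auto

lemma cnt_shift:
  assumes "(s, t) \<in> Sigma234"
  shows "\<exists>d. \<forall>g. int (cnt s v g) = int (cnt t v g) + d"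
proof -
  have e1: "eval (\<lambda>x y::int. x - y) (dl v) s = eval (\<lambda>x y::int. x - y) (dl v) t"
   and e2: "eval (\<lambda>x y::int. - x + y) (dl v) s = eval (\<lambda>x y::int. - x + y) (dl v) t"
   and e3: "eval (\<lambda>x y::int. - x - y) (dl v) s = eval (\<lambda>x y::int. - x - y) (dl v) t"
    using assms by (auto simp: Sigma234_def satisfies_def)
  note E = e1[unfolded ch1] e2[unfolded ch2] e3[unfolded ch3]
  show ?thesis
  proof (intro exI allI)
    fix g
    show "int (cnt s v g) = int (cnt t v g) + (int (cnt s v (False,False)) - int (cnt t v (False,False)))"
    proof (cases g)
      case (Pair a b)
      then show ?thesis using E by (cases a; cases b; simp; linarith)
    qed
  qed
qed


lemma kcnt_shift:
  assumes "(s, t) \<in> Sigma234"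
  shows "\<exists>d. \<forall>g. int (kcnt s g) = int (kcnt t g) + d"
proof -
  have e1: "eval (\<lambda>x y::int. x - y) (\<lambda>_. 1) s = eval (\<lambda>x y::int. x - y) (\<lambda>_. 1) t"
   and e2: "eval (\<lambda>x y::int. - x + y) (\<lambda>_. 1) s = eval (\<lambda>x y::int. - x + y) (\<lambda>_. 1) t"
   and e3: "eval (\<lambda>x y::int. - x - y) (\<lambda>_. 1) s = eval (\<lambda>x y::int. - x - y) (\<lambda>_. 1) t"
    using assms by (auto simp: Sigma234_def satisfies_def)
  note E = e1[unfolded lh1] e2[unfolded lh2] e3[unfolded lh3]
  note R = krel[of s "(False,False)"] krel[of s "(False,True)"] krel[of s "(True,False)"] krel[of s "(True,True)"]
    krel[of t "(False,False)"] krel[of t "(False,True)"] krel[of t "(True,False)"] krel[of t "(True,True)"]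
  note R' = R[simplified flipL_def flipR_def d00_def, simplified]
  show ?thesis
  proof (intro exI allI)
    fix g
    show "int (kcnt s g) = int (kcnt t g) + (int (kcnt s (False,False)) - int (kcnt t (False,False)))"
    proof (cases g)
      case (Pair a b)
      then show ?thesis using E R' by (cases a; cases b; simp; linarith)
    qed
  qed
qed

fun vars :: "gterm \<Rightarrow> nat set" where
  "vars (Var n) = {n}"
| "vars (Op s t) = vars s \<union> vars t"

lemma finite_vars: "finite (vars t)" by (induction t) auto

definition restr :: "(nat \<Rightarrow> fterm) \<Rightarrow> nat set \<Rightarrow> nat \<Rightarrow> fterm" where
  "restr \<rho> V w = (if w \<in> V then \<rho> w else 0)"

lemma eval_restr: "vars t \<subseteq> V \<Longrightarrow> eval mop (restr \<rho> V) t = eval mop \<rho> t"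
  by (induction t) (auto simp: restr_def)

lemma restr_eq:
  assumes "(s, t) \<in> Sigma234" and "finite V"
  shows "eval mop (restr \<rho> V) s = eval mop (restr \<rho> V) t"
  using assms(2)
proof (induction V rule: finite_induct)
  case empty
  have r: "restr \<rho> {} = (\<lambda>_. 0)" by (simp add: restr_def fun_eq_iff)
  obtain d where "\<forall>g. int (kcnt s g) = int (kcnt t g) + d" using kcnt_shift[OF assms(1)] by blast
  then have "lin (kcnt s) c0 = lin (kcnt t) c0" by (intro lin_shift) auto
  then show ?case by (simp add: r E_const)
next
  case (insert v V)
  have r1: "restr \<rho> (insert v V) = (restr \<rho> V)(v := \<rho> v)" by (simp add: restr_def fun_eq_iff)
  have r2: "(restr \<rho> V)(v := 0) = restr \<rho> V" using insert.hyps by (simp add: restr_def fun_eq_iff)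
  obtain d where "\<forall>g. int (cnt s v g) = int (cnt t v g) + d" using cnt_shift[OF assms(1)] by blast
  then have L: "lin (cnt s v) (\<rho> v) = lin (cnt t v) (\<rho> v)" by (intro lin_shift) auto
  show ?case unfolding r1 E_upd[of "restr \<rho> V" v "\<rho> v" s] E_upd[of "restr \<rho> V" v "\<rho> v" t] r2
    using insert.IH L by simp
qed

lemma completeness:
  assumes "(s, t) \<in> Sigma234"
  shows "derivable BB s t"
proof -
  let ?\<rho> = "\<lambda>n. abs_fterm (Var n)"
  let ?V = "vars s \<union> vars t"
  have "eval mop ?\<rho> s = eval mop (restr ?\<rho> ?V) s" by (rule eval_restr[symmetric]) auto
  also have "\<dots> = eval mop (restr ?\<rho> ?V) t" by (rule restr_eq[OF assms]) (simp add: finite_vars)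
  also have "\<dots> = eval mop ?\<rho> t" by (rule eval_restr) auto
  finally have "abs_fterm s = abs_fterm t" by (simp add: eval_abs)
  thus ?thesis by (simp add: fterm.abs_eq_iff)
qed

theorem theorem7p2:
  shows "is_basis_of
     { (Op (Op vx vy) (Op vz vt), Op (Op vx vz) (Op vy vt)),
       (Op (Op vx vy) (Op vz vt), Op (Op vt vy) (Op vz vx)),
       (Op (Op vx (Op vy vy)) (Op vy vy), vx) }
     Sigma234"
proof -
  have "consequences BB = Sigma234"
    unfolding consequences_def using soundness completeness by auto
  thus ?thesis by (simp add: is_basis_of_def BB_def)
qed

end
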